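(* Let $n\ge1$, $z\in\{1,\dots,n+1\}$, and let $v_{n,z}=(a_1,\dots,a_n)$ with $a_i=z+1-i$ for $i<z$ and $a_i=1$ for $i\ge z$. Then the vector $(T_1(v_{n,z}),\dots,T_n(v_{n,z}))$ defines a Dyck path of length $2(n+1)$.
   Context: A Dyck path of length $2N$ is a word $w$ in the letters $U,D$ with $N$ letters $U$ and $N$ letters $D$ such that every prefix of $w$ contains at least as many $U$'s as $D$'s; $\mathfrak{D}_{2N}$ denotes the set of them. For $G\in\mathfrak{D}_{2(n+1)}$ let $m_i$ be the number of $U$'s preceding the $i$-th $D$ in $G$, and set $v_G=(v_1,\dots,v_n)$ with $v_i=m_i-i+1$. A vector $w\in\mathbb{Z}^n$ defines a Dyck path of length $2(n+1)$ if $w=v_G$ for some $G\in\mathfrak{D}_{2(n+1)}$. For $u=(u_1,\dots,u_m)\in\mathbb{N}^m$ and $1\le i\le m$, $T_i(u)$ is defined as follows: put $r_0=u_i$; as long as there is an index $l\in\{1,\dots,i\}$ with $r_k-u_l>0$, let $l_k$ be the largest such index and set $r_{k+1}=r_k-u_{l_k}$; if the process stops at $r_t$ (with $t\ge0$ steps), then $T_i(u)=r_t+t$. (In particular $T_i(u)=u_i$ if $u_i-u_l\le0$ for all $l\le i$.) For example, for $u=(14,52,4,23,9,2)$ one gets $(T_1(u),\dots,T_6(u))=(14,13,4,8,3,2)$. *)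

theory Defs
  imports Main
begin

datatype step = U | D

definition cnt :: "step \<Rightarrow> step list \<Rightarrow> nat" where
  "cnt s w = length (filter (\<lambda>x. x = s) w)"

definition dyck_paths :: "nat \<Rightarrow> step list set" where
  "dyck_paths N = {w. length w = 2 * N \<and> cnt U w = N \<and> cnt D w = N \<and>
      (\<forall>k \<le> length w. cnt D (take k w) \<le> cnt U (take k w))}"

text \<open>0-based positions of the letters D in w; the i-th D (1-based) is at position
  \<open>D_positions w ! (i - 1)\<close>.\<close>
definition D_positions :: "step list \<Rightarrow> nat list" where
  "D_positions w = filter (\<lambda>j. w ! j = D) [0..<length w]"

definition m_of :: "step list \<Rightarrow> nat \<Rightarrow> nat" where
  "m_of w i = cnt U (take (D_positions w ! (i - 1)) w)"

definition vG :: "nat \<Rightarrow> step list \<Rightarrow> int list" where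
  "vG n G = map (\<lambda>i. int (m_of G i) - int i + 1) [1..<n+1]"

definition defines_dyck :: "nat \<Rightarrow> int list \<Rightarrow> bool" where
  "defines_dyck n w \<longleftrightarrow> (\<exists>G \<in> dyck_paths (n+1). w = vG n G)"

text \<open>The process defining T_i(u) (u as a list, indices 1-based):
  \<open>Tproc u i r res\<close> means that the process started at r stops at some r_t after t steps
  and res = r_t + t.\<close>
inductive Tproc :: "nat list \<Rightarrow> nat \<Rightarrow> nat \<Rightarrow> nat \<Rightarrow> bool" for u i where
  stop: "\<not> (\<exists>l \<in> {1..i}. u ! (l - 1) < r) \<Longrightarrow> Tproc u i r r"
| step: "\<exists>l \<in> {1..i}. u ! (l - 1) < r \<Longrightarrow>
         Tproc u i (r - u ! (Max {l \<in> {1..i}. u ! (l - 1) < r} - 1)) res \<Longrightarrow>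
         Tproc u i r (Suc res)"

definition T :: "nat list \<Rightarrow> nat \<Rightarrow> nat" where
  "T u i = (THE res. Tproc u i (u ! (i - 1)) res)"

definition Tvec :: "nat list \<Rightarrow> nat list" where
  "Tvec u = map (T u) [1..<length u + 1]"

definition vnz :: "nat \<Rightarrow> nat \<Rightarrow> nat list" where
  "vnz n z = map (\<lambda>i. if i < z then z + 1 - i else 1) [1..<n+1]"

end

theory Submission
  imports Defs
begin

lemma cnt_append[simp]: "cnt s (a @ b) = cnt s a + cnt s b"
  by (simp add: cnt_def)

lemma cnt_Nil[simp]: "cnt s [] = 0" by (simp add: cnt_def)

lemma cnt_Cons[simp]: "cnt s (x # w) = (if x = s then 1 else 0) + cnt s w"
  by (simp add: cnt_def)

lemma cnt_replicate[simp]: "cnt s (replicate k x) = (if x = s then k else 0)"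
  by (induction k) auto

definition UDs :: "nat \<Rightarrow> step list" where
  "UDs m = concat (replicate m [U, D])"

lemma UDs_Suc: "UDs (Suc m) = U # D # UDs m" by (simp add: UDs_def)
lemma UDs_0[simp]: "UDs 0 = []" by (simp add: UDs_def)
lemma UDs_add: "UDs (a + b) = UDs a @ UDs b"
  by (simp add: UDs_def replicate_add)

lemma cnt_UDs[simp]: "cnt s (UDs m) = m"
  by (induction m) (cases s; simp add: UDs_Suc)+

lemma length_UDs[simp]: "length (UDs m) = 2 * m"
  by (induction m) (auto simp: UDs_Suc)

definition bal :: "step list \<Rightarrow> bool" where
  "bal w = (\<forall>k. cnt D (take k w) \<le> cnt U (take k w))"

lemma bal_append:
  assumes "bal p" "cnt D p = cnt U p" "bal q" shows "bal (p @ q)"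
  unfolding bal_def
proof
  fix k
  show "cnt D (take k (p @ q)) \<le> cnt U (take k (p @ q))"
  proof (cases "k \<le> length p")
    case True
    then show ?thesis using assms(1) by (simp add: bal_def)
  next
    case False
    then show ?thesis using assms(2,3) by (simp add: bal_def)
  qed
qed

lemma bal_UD: "bal [U, D]"
  unfolding bal_def
proof
  fix k show "cnt D (take k [U, D]) \<le> cnt U (take k [U, D])"
    by (cases k; cases "k - 1"; simp)
qed

lemma bal_UDs: "bal (UDs m)"
proof (induction m)
  case 0 then show ?case by (simp add: bal_def)
next
  case (Suc m)
  have "UDs (Suc m) = [U, D] @ UDs m" by (simp add: UDs_Suc)
  then show ?case using bal_append[OF bal_UD _ Suc] by simp
qed

lemma bal_peak: "bal (replicate z U @ replicate z D)"
  unfolding bal_def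
proof
  fix k show "cnt D (take k (replicate z U @ replicate z D)) \<le> cnt U (take k (replicate z U @ replicate z D))"
    by (cases "k \<le> z") auto
qed

lemma D_positions_append:
  "D_positions (p @ q) = D_positions p @ map ((+) (length p)) (D_positions q)"
proof -
  have e: "[0..<length (p @ q)] = [0..<length p] @ map ((+) (length p)) [0..<length q]"
  proof -
    have "[length p..<length p + length q] = map ((+) (length p)) [0..<length q]"
      by (rule nth_equalityI) auto
    moreover have "[0..<length p + length q] = [0..<length p] @ [length p..<length p + length q]"
      using upt_add_eq_append[of 0 "length p" "length q"] by simp
    ultimately show ?thesis by simp
  qed
  have 1: "filter (\<lambda>j. (p @ q) ! j = D) [0..<length p] = filter (\<lambda>j. p ! j = D) [0..<length p]"
    by (rule filter_cong) (auto simp: nth_append)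
  have 2: "filter (\<lambda>j. (p @ q) ! j = D) (map ((+) (length p)) [0..<length q])
      = map ((+) (length p)) (filter (\<lambda>j. q ! j = D) [0..<length q])"
    by (simp add: filter_map o_def nth_append)
  show ?thesis unfolding D_positions_def e filter_append 1 2 ..
qed

lemma length_D_positions: "length (D_positions p) = cnt D p"
  unfolding D_positions_def cnt_def
proof (induction p rule: rev_induct)
  case Nil then show ?case by simp
next
  case (snoc x xs)
  have "filter (\<lambda>j. (xs @ [x]) ! j = D) [0..<length (xs @ [x])]
      = filter (\<lambda>j. xs ! j = D) [0..<length xs] @ (if x = D then [length xs] else [])"
    by (auto simp: nth_append intro!: filter_cong)
  then show ?case using snoc by simp
qed

lemma m_of_split:
  assumes "w = p @ D # s" "cnt D p = i - 1" "i \<ge> 1"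
  shows "m_of w i = cnt U p"
proof -
  have "D_positions w = D_positions p @ map ((+) (length p)) (D_positions (D # s))"
    using assms(1) D_positions_append by simp
  moreover have "D_positions (D # s) ! 0 = 0"
    using D_positions_append[of "[D]" s] by (simp add: D_positions_def)
  moreover have "D_positions (D # s) \<noteq> []"
    using length_D_positions[of "D # s"] by auto
  ultimately have "D_positions w ! (i - 1) = length p"
    using assms(2) length_D_positions[of p] by (simp add: nth_append)
  then show ?thesis using assms(1) unfolding m_of_def by simp
qed

lemma Tproc_stop_only:
  assumes "Tproc u i r res" "\<not> (\<exists>l \<in> {1..i}. u ! (l - 1) < r)"
  shows "res = r"
  using assms by (cases rule: Tproc.cases) auto

lemma T_eq:
  assumes "\<not> (\<exists>l \<in> {1..i}. u ! (l - 1) < u ! (i - 1))"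
  shows "T u i = u ! (i - 1)"
proof -
  have "Tproc u i (u ! (i - 1)) (u ! (i - 1))" using assms by (rule Tproc.stop)
  then show ?thesis unfolding T_def
    using Tproc_stop_only[OF _ assms] by (intro the_equality) auto
qed

theorem proposition13:
  fixes n z :: nat
  assumes "n \<ge> 1" and "1 \<le> z" and "z \<le> n + 1"
  shows "defines_dyck n (map int (Tvec (vnz n z)))"
proof -
  define f where "f = (\<lambda>i::nat. if i < z then z + 1 - i else 1)"
  have vnz: "vnz n z = map f [1..<n+1]" by (simp add: vnz_def f_def)
  have nth: "vnz n z ! (l - 1) = f l" if "1 \<le> l" "l \<le> n" for l
    using that by (simp add: vnz del: upt_Suc)
  have Tv: "Tvec (vnz n z) = map f [1..<n+1]"
    unfolding Tvec_def
  proof (rule map_cong)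
    show "[1..<length (vnz n z) + 1] = [1..<n+1]" by (simp add: vnz)
  next
    fix i assume "i \<in> set [1..<n+1]"
    then have i: "1 \<le> i" "i \<le> n" by auto
    have "\<not> (\<exists>l \<in> {1..i}. vnz n z ! (l - 1) < vnz n z ! (i - 1))"
      using i nth by (auto simp: f_def)
    then show "T (vnz n z) i = f i" using T_eq nth i by simp
  qed
  define G where "G = replicate z U @ replicate z D @ UDs (n + 1 - z)"
  have dy: "G \<in> dyck_paths (n+1)"
  proof -
    have "bal G" unfolding G_def
      using bal_append[OF bal_peak _ bal_UDs] by simp
    moreover have "length G = 2 * (n+1)" "cnt U G = n+1" "cnt D G = n+1"
      using assms by (auto simp: G_def)
    ultimately show ?thesis by (auto simp: dyck_paths_def bal_def)
  qed
  have m: "int (f i) = int (m_of G i) - int i + 1" if "1 \<le> i" "i \<le> n" for i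
  proof (cases "i \<le> z")
    case True
    have "G = (replicate z U @ replicate (i - 1) D) @ D # (replicate (z - i) D @ UDs (n + 1 - z))"
    proof -
      have "replicate z D = replicate (i - 1) D @ replicate (Suc (z - i)) D"
      proof -
        have "z = (i - 1) + Suc (z - i)" using True that by simp
        then show ?thesis by (metis replicate_add)
      qed
      then show ?thesis by (simp add: G_def)
    qed
    then have "m_of G i = cnt U (replicate z U @ replicate (i - 1) D)"
      by (rule m_of_split) (use that in simp_all)
    then have "m_of G i = z" by simp
    then show ?thesis using True that by (auto simp: f_def)
  next
    case False
    have "UDs (n + 1 - z) = UDs (i - z - 1) @ [U] @ D # UDs (n + 1 - i)"
    proof -
      have "n + 1 - z = (i - z - 1) + Suc (n + 1 - i)" using False that by simp
      then have "UDs (n + 1 - z) = UDs (i - z - 1) @ UDs (Suc (n + 1 - i))"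
        by (metis UDs_add)
      then show ?thesis by (simp add: UDs_Suc)
    qed
    then have "G = (replicate z U @ replicate z D @ UDs (i - z - 1) @ [U]) @ D # UDs (n + 1 - i)"
      by (simp add: G_def)
    then have "m_of G i = cnt U (replicate z U @ replicate z D @ UDs (i - z - 1) @ [U])"
      by (rule m_of_split) (use that False in simp_all)
    then have "m_of G i = i" using False by simp
    then show ?thesis using False that by (auto simp: f_def)
  qed
  have "map int (map f [1..<n+1]) = vG n G"
    unfolding vG_def using m by (auto intro!: map_cong)
  then show ?thesis unfolding defines_dyck_def Tv using dy by blast
qed

end
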